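(* Let $n\ge 1$ and consider the continuous-time networked SAIR(S) system: for each $i\in\{1,\dots,n\}$, \begin{align*} \dot{s}_{i}(t)&=-\beta_{i} s_{i}(t) \sum_{j=1}^n W_{ij}\big( a_{j}(t)+ p_{j}(t)\big)+\delta_{i} r_{i}(t),\\ \dot{a}_{i}(t)&=q\beta_{i} s_{i}(t) \sum_{j=1}^n W_{ij}\big( a_{j}(t)+ p_{j}(t)\big)-\sigma_{i} a_{i}(t)-\kappa_{i}a_{i}(t),\\ \dot{p}_{i}(t)&=(1-q)\beta_{i} s_{i}(t) \sum_{j=1}^n W_{ij}\big( a_{j}(t)+ p_{j}(t)\big)+\sigma_{i} a_{i}(t)-\gamma_{i} p_{i}(t),\\ \dot{r}_{i}(t)&=\kappa_{i} a_{i}(t)+\gamma_{i} p_{i}(t)-\delta_{i} r_{i}(t), \end{align*} where for all $i,j\in\{1,\dots,n\}$ we have $\beta_i,\gamma_i,\delta_i,\sigma_i,\kappa_i,W_{ij}\ge 0$ and $0\le q\le 1$. Suppose that $s_i(0),a_i(0),p_i(0),r_i(0)\in[0,1]$ and $s_i(0)+a_i(0)+p_i(0)+r_i(0)=1$ for all $i$. Then for all $t\ge 0$ and all $i\in\{1,\dots,n\}$, $s_i(t),a_i(t),p_i(t),r_i(t)\in[0,1]$ and $s_i(t)+a_i(t)+p_i(t)+r_i(t)=1$.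
   Context: The variables $s_i,a_i,p_i,r_i$ are the proportions of subpopulation $i$ that are susceptible, asymptomatic-infected, symptomatic-infected and recovered; $W=[W_{ij}]$ is the adjacency matrix of the interconnection network; $\beta_i$ is the transmission rate, $\sigma_i$ the asymptomatic-to-symptomatic progression rate, $\kappa_i,\gamma_i$ the recovery rates of asymptomatic and symptomatic infected, $\delta_i$ the rate of loss of immunity, and $q$ the proportion of new infections that are asymptomatic. *)

theory Defs
  imports "HOL-Analysis.Analysis"
begin

end

theory Submission
  imports Defs
begin

lemma barrier:
  fixes y :: "'k \<Rightarrow> real \<Rightarrow> real" and K :: "'k set" and T :: real
  assumes fin: "finite K" and T: "0 \<le> T"
  and cont: "\<And>k. k\<in>K \<Longrightarrow> continuous_on {0..T} (y k)"
  and y0: "\<And>k. k\<in>K \<Longrightarrow> y k 0 > 0"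
  and pos: "\<And>k t. k\<in>K \<Longrightarrow> 0<t \<Longrightarrow> t\<le>T \<Longrightarrow> (\<forall>j\<in>K. y j t \<ge> 0) \<Longrightarrow> y k t = 0
            \<Longrightarrow> \<exists>D>0. (y k has_real_derivative D) (at t)"
  shows "\<forall>k\<in>K. \<forall>t\<in>{0..T}. y k t > 0"
proof (rule ccontr)
  assume nt: "\<not> ?thesis"
  define A where "A = (\<Union>k\<in>K. {0..T} \<inter> y k -` {..0})"
  have Ane: "A \<noteq> {}" using nt unfolding A_def by (auto simp: not_less)
  have Abdd: "bdd_below A" unfolding A_def by (rule bdd_belowI[of _ 0]) auto
  have Acl: "closed A" unfolding A_def
    using fin cont by (intro closed_UN) (auto intro!: continuous_closed_preimage)
  define tm where "tm = Inf A"
  have tmA: "tm \<in> A" unfolding tm_def using closed_contains_Inf[OF Ane Abdd Acl] .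
  then obtain k where k: "k \<in> K" "0 \<le> tm" "tm \<le> T" "y k tm \<le> 0" unfolding A_def by auto
  have below: "y j t > 0" if "j \<in> K" "0 \<le> t" "t < tm" for j t
  proof (rule ccontr)
    assume "\<not> y j t > 0"
    then have "t \<in> A" using that k unfolding A_def by (auto simp: not_less)
    then have "tm \<le> t" unfolding tm_def using Abdd by (simp add: cInf_lower)
    then show False using that by simp
  qed
  have tmpos: "tm > 0" using k y0[of k] by (cases "tm = 0") auto
  have allnn: "\<forall>j\<in>K. y j tm \<ge> 0"
  proof
    fix j assume j: "j \<in> K"
    show "y j tm \<ge> 0"
    proof (rule ccontr)
      assume "\<not> y j tm \<ge> 0"
      moreover have "continuous_on {0..tm} (y j)"
        using cont[OF j] continuous_on_subset k by fastforce
      ultimately obtain x where "0 \<le> x" "x \<le> tm" "y j x = 0"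
        using IVT2'[of "y j" tm 0 0] y0[OF j] tmpos by auto
      moreover have "x \<noteq> tm" using \<open>\<not> y j tm \<ge> 0\<close> \<open>y j x = 0\<close> by auto
      ultimately show False using below[OF j, of x] by auto
    qed
  qed
  then have "y k tm = 0" using k by force
  then obtain D where D: "D > 0" "(y k has_real_derivative D) (at tm)"
    using pos[OF k(1) tmpos k(3) allnn] by blast
  obtain d where d: "d > 0" "\<forall>h>0. h < d \<longrightarrow> y k (tm - h) < y k tm"
    using DERIV_pos_inc_left[OF D(2) D(1)] by blast
  define h where "h = min (d/2) (tm/2)"
  have "y k (tm - h) < 0" using d \<open>y k tm = 0\<close> tmpos unfolding h_def by auto
  moreover have "y k (tm - h) > 0" using below[OF k(1), of "tm - h"] d tmpos unfolding h_def by auto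
  ultimately show False by simp
qed

lemma prod_lb:
  fixes s S \<eta> w :: real
  assumes "-\<eta> \<le> s" "s \<le> 4" "-2*\<eta>*w \<le> S" "S \<le> 4*w" "0\<le>\<eta>" "0 \<le> w"
  shows "s*S \<ge> -8*\<eta>*w"
proof (cases "s \<ge> 0")
  case True
  have "s*S \<ge> s*(-2*\<eta>*w)" using True assms by (intro mult_left_mono) auto
  moreover have "s*(-2*\<eta>*w) \<ge> 4*(-2*\<eta>*w)" using True assms
    by (intro mult_right_mono_neg) auto
  ultimately show ?thesis by linarith
next
  case False
  show ?thesis
  proof (cases "S \<ge> 0")
    case True
    have "s*S \<ge> -\<eta>*S" using True assms by (intro mult_right_mono) auto
    moreover have "-\<eta>*S \<ge> -\<eta>*(4*w)" using True assms by (intro mult_left_mono_neg) auto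
    moreover have "\<eta>*w \<ge> 0" using assms by simp
    moreover have "-\<eta>*(4*w) = -4*(\<eta>*w)" "-8*\<eta>*w = -8*(\<eta>*w)" by simp_all
    ultimately show ?thesis by linarith
  next
    case F2: False
    have "s*S > 0" using False F2 by (simp add: mult_neg_neg)
    moreover have "-8*\<eta>*w \<le> 0" using assms by simp
    ultimately show ?thesis by simp
  qed
qed

lemma case_s:
  fixes \<beta> \<delta> w \<eta> S r s L :: real
  assumes "\<beta>\<ge>0" "\<delta>\<ge>0" "w\<ge>0" "0<\<eta>" "\<eta>\<le>1" "S\<ge>-2*\<eta>*w" "r\<ge>-\<eta>" "s = -\<eta>" "1+\<delta>+8*\<beta>*w \<le> L"
  shows "- \<beta> * s * S + \<delta> * r + L*\<eta> > 0"
proof -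
  have "\<eta>*w \<le> w" using assms by (simp add: mult_left_le_one_le)
  moreover have "-2*\<eta>*w = -2*(\<eta>*w)" by simp
  ultimately have "S \<ge> -2*w" using assms by linarith
  then have "\<eta>*S \<ge> \<eta>*(-2*w)" using assms by (intro mult_left_mono) auto
  then have f2: "\<beta>*(\<eta>*S) \<ge> \<beta>*(\<eta>*(-2*w))" using assms(1) by (rule mult_left_mono)
  have f1: "- \<beta> * s * S = \<beta>*(\<eta>*S)" using assms by simp
  have f3: "\<beta>*(\<eta>*(-2*w)) = -2*(\<beta>*w*\<eta>)" by (simp add: algebra_simps)
  have f4: "\<delta>*r \<ge> -(\<delta>*\<eta>)" using assms mult_left_mono[of "-\<eta>" r \<delta>] by simp
  have "L*\<eta> \<ge> (1+\<delta>+8*\<beta>*w)*\<eta>" using assms by (intro mult_right_mono) auto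
  moreover have "(1+\<delta>+8*\<beta>*w)*\<eta> = \<eta> + \<delta>*\<eta> + 8*(\<beta>*w*\<eta>)" by (simp add: algebra_simps)
  ultimately have f5: "L*\<eta> \<ge> \<eta> + \<delta>*\<eta> + 8*(\<beta>*w*\<eta>)" by linarith
  have f6: "\<beta>*w*\<eta> \<ge> 0" using assms by simp
  show ?thesis using f1 f2 f3 f4 f5 f6 assms(4) by linarith
qed
lemma case_a:
  fixes \<beta> \<sigma> \<kappa> w \<eta> P a L q :: real
  assumes "\<beta>\<ge>0" "\<sigma>\<ge>0" "\<kappa>\<ge>0" "w\<ge>0" "0<\<eta>" "0\<le>q" "q\<le>1" "P\<ge>-8*\<eta>*w" "a = -\<eta>" "1+\<sigma>+\<kappa>+8*\<beta>*w \<le> L"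
  shows "q * \<beta> * P - \<sigma> * a - \<kappa> * a + L*\<eta> > 0"
proof -
  have f1: "q*\<beta>*P \<ge> q*\<beta>*(-8*\<eta>*w)" using assms by (intro mult_left_mono) auto
  have f2: "q*\<beta>*(-8*\<eta>*w) = -8*(q*(\<beta>*w*\<eta>))" by (simp add: algebra_simps)
  have f3: "q*(\<beta>*w*\<eta>) \<le> \<beta>*w*\<eta>" using assms by (simp add: mult_left_le_one_le)
  have "L*\<eta> \<ge> (1+\<sigma>+\<kappa>+8*\<beta>*w)*\<eta>" using assms by (intro mult_right_mono) auto
  moreover have "(1+\<sigma>+\<kappa>+8*\<beta>*w)*\<eta> = \<eta> + \<sigma>*\<eta> + \<kappa>*\<eta> + 8*(\<beta>*w*\<eta>)" by (simp add: algebra_simps)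
  ultimately have f5: "L*\<eta> \<ge> \<eta> + \<sigma>*\<eta> + \<kappa>*\<eta> + 8*(\<beta>*w*\<eta>)" by linarith
  have f6: "\<sigma>*a = -(\<sigma>*\<eta>)" "\<kappa>*a = -(\<kappa>*\<eta>)" using assms by simp_all
  have f7: "\<sigma>*\<eta> \<ge> 0" "\<kappa>*\<eta> \<ge> 0" using assms by simp_all
  show ?thesis using f1 f2 f3 f5 f6 f7 assms(5) by linarith
qed
lemma case_p:
  fixes \<beta> \<sigma> \<gamma> w \<eta> P a p L q :: real
  assumes "\<beta>\<ge>0" "\<sigma>\<ge>0" "\<gamma>\<ge>0" "w\<ge>0" "0<\<eta>" "0\<le>q" "q\<le>1" "P\<ge>-8*\<eta>*w" "a \<ge> -\<eta>" "p = -\<eta>" "1+\<sigma>+\<gamma>+8*\<beta>*w \<le> L"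
  shows "(1 - q) * \<beta> * P + \<sigma> * a - \<gamma> * p + L*\<eta> > 0"
proof -
  have f1: "(1-q)*\<beta>*P \<ge> (1-q)*\<beta>*(-8*\<eta>*w)" using assms by (intro mult_left_mono) auto
  have f2: "(1-q)*\<beta>*(-8*\<eta>*w) = -8*((1-q)*(\<beta>*w*\<eta>))" by (simp add: algebra_simps)
  have f3: "(1-q)*(\<beta>*w*\<eta>) \<le> \<beta>*w*\<eta>" using assms by (simp add: mult_left_le_one_le)
  have "L*\<eta> \<ge> (1+\<sigma>+\<gamma>+8*\<beta>*w)*\<eta>" using assms by (intro mult_right_mono) auto
  moreover have "(1+\<sigma>+\<gamma>+8*\<beta>*w)*\<eta> = \<eta> + \<sigma>*\<eta> + \<gamma>*\<eta> + 8*(\<beta>*w*\<eta>)" by (simp add: algebra_simps)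
  ultimately have f5: "L*\<eta> \<ge> \<eta> + \<sigma>*\<eta> + \<gamma>*\<eta> + 8*(\<beta>*w*\<eta>)" by linarith
  have f6: "\<sigma>*a \<ge> -(\<sigma>*\<eta>)" using assms mult_left_mono[of "-\<eta>" a \<sigma>] by simp
  have f8: "\<gamma>*p = -(\<gamma>*\<eta>)" using assms by simp
  have f7: "\<gamma>*\<eta> \<ge> 0" using assms by simp_all
  show ?thesis using f1 f2 f3 f5 f6 f7 f8 assms(5) by linarith
qed
lemma case_r:
  fixes \<kappa> \<gamma> \<delta> \<eta> a p r L :: real
  assumes "\<kappa>\<ge>0" "\<gamma>\<ge>0" "\<delta>\<ge>0" "0<\<eta>" "a \<ge> -\<eta>" "p \<ge> -\<eta>" "r = -\<eta>" "1+\<kappa>+\<gamma> \<le> L"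
  shows "\<kappa> * a + \<gamma> * p - \<delta> * r + L*\<eta> > 0"
proof -
  have f1: "\<kappa>*a \<ge> -(\<kappa>*\<eta>)" using assms mult_left_mono[of "-\<eta>" a \<kappa>] by simp
  have f2: "\<gamma>*p \<ge> -(\<gamma>*\<eta>)" using assms mult_left_mono[of "-\<eta>" p \<gamma>] by simp
  have "L*\<eta> \<ge> (1+\<kappa>+\<gamma>)*\<eta>" using assms by (intro mult_right_mono) auto
  moreover have "(1+\<kappa>+\<gamma>)*\<eta> = \<eta> + \<kappa>*\<eta> + \<gamma>*\<eta>" by (simp add: algebra_simps)
  ultimately have f5: "L*\<eta> \<ge> \<eta> + \<kappa>*\<eta> + \<gamma>*\<eta>" by linarith
  have f6: "\<delta>*r = -(\<delta>*\<eta>)" "\<delta>*\<eta> \<ge> 0" using assms by simp_all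
  show ?thesis using f1 f2 f5 f6 assms(4) by linarith
qed
theorem lemma1:
  fixes n :: nat
    and s a p r :: "nat \<Rightarrow> real \<Rightarrow> real"
    and W :: "nat \<Rightarrow> nat \<Rightarrow> real"
    and \<beta> \<gamma> \<delta> \<sigma> \<kappa> :: "nat \<Rightarrow> real"
    and q :: real
  assumes n: "n \<ge> 1"
    and params: "\<And>i. i \<in> {1..n} \<Longrightarrow> \<beta> i \<ge> 0 \<and> \<gamma> i \<ge> 0 \<and> \<delta> i \<ge> 0 \<and> \<sigma> i \<ge> 0 \<and> \<kappa> i \<ge> 0"
    and Wnn: "\<And>i j. i \<in> {1..n} \<Longrightarrow> j \<in> {1..n} \<Longrightarrow> W i j \<ge> 0"
    and q: "0 \<le> q" "q \<le> 1"
    and ds: "\<And>i t. i \<in> {1..n} \<Longrightarrow> t \<ge> 0 \<Longrightarrow>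
      (s i has_real_derivative
        (- \<beta> i * s i t * (\<Sum>j=1..n. W i j * (a j t + p j t)) + \<delta> i * r i t)) (at t within {0..})"
    and da: "\<And>i t. i \<in> {1..n} \<Longrightarrow> t \<ge> 0 \<Longrightarrow>
      (a i has_real_derivative
        (q * \<beta> i * s i t * (\<Sum>j=1..n. W i j * (a j t + p j t)) - \<sigma> i * a i t - \<kappa> i * a i t)) (at t within {0..})"
    and dp: "\<And>i t. i \<in> {1..n} \<Longrightarrow> t \<ge> 0 \<Longrightarrow>
      (p i has_real_derivative
        ((1 - q) * \<beta> i * s i t * (\<Sum>j=1..n. W i j * (a j t + p j t)) + \<sigma> i * a i t - \<gamma> i * p i t)) (at t within {0..})"
    and dr: "\<And>i t. i \<in> {1..n} \<Longrightarrow> t \<ge> 0 \<Longrightarrow>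
      (r i has_real_derivative
        (\<kappa> i * a i t + \<gamma> i * p i t - \<delta> i * r i t)) (at t within {0..})"
    and init: "\<And>i. i \<in> {1..n} \<Longrightarrow>
      s i 0 \<in> {0..1} \<and> a i 0 \<in> {0..1} \<and> p i 0 \<in> {0..1} \<and> r i 0 \<in> {0..1} \<and>
      s i 0 + a i 0 + p i 0 + r i 0 = 1"
  shows "\<forall>t \<ge> 0. \<forall>i \<in> {1..n}.
      s i t \<in> {0..1} \<and> a i t \<in> {0..1} \<and> p i t \<in> {0..1} \<and> r i t \<in> {0..1} \<and>
      s i t + a i t + p i t + r i t = 1"
proof -
  have par: "\<beta> i \<ge> 0" "\<gamma> i \<ge> 0" "\<delta> i \<ge> 0" "\<sigma> i \<ge> 0" "\<kappa> i \<ge> 0" if "i \<in> {1..n}" for i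
    using params[OF that] by auto
  have cons: "s i t + a i t + p i t + r i t = 1" if i: "i \<in> {1..n}" and t: "t \<ge> 0" for i t
  proof -
    have "((\<lambda>t. s i t + a i t + p i t + r i t) has_real_derivative 0) (at x within {0..})"
      if "x \<in> {0::real..}" for x
    proof -
      have x: "x \<ge> 0" using that by simp
      show ?thesis
        by (rule DERIV_cong[OF DERIV_add[OF DERIV_add[OF DERIV_add[OF ds[OF i x] da[OF i x]] dp[OF i x]] dr[OF i x]]])
          (simp add: algebra_simps)
    qed
    then have "\<exists>c. \<forall>x\<in>{0::real..}. s i x + a i x + p i x + r i x = c"
      by (intro has_field_derivative_zero_constant) (auto simp: convex_real_interval)
    then obtain c where c: "\<forall>x\<in>{0::real..}. s i x + a i x + p i x + r i x = c" by blast
    then have "c = 1" using init[OF i] by force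
    then show ?thesis using c t by auto
  qed
  have cont: "continuous_on {0..T} (s i) \<and> continuous_on {0..T} (a i) \<and>
      continuous_on {0..T} (p i) \<and> continuous_on {0..T} (r i)" if i: "i \<in> {1..n}" for i T
  proof -
    have "continuous_on {0..} (s i)" by (rule DERIV_continuous_on[OF ds[OF i]]) simp
    moreover have "continuous_on {0..} (a i)" by (rule DERIV_continuous_on[OF da[OF i]]) simp
    moreover have "continuous_on {0..} (p i)" by (rule DERIV_continuous_on[OF dp[OF i]]) simp
    moreover have "continuous_on {0..} (r i)" by (rule DERIV_continuous_on[OF dr[OF i]]) simp
    moreover have "{0..T} \<subseteq> {0::real..}" by auto
    ultimately show ?thesis by (meson continuous_on_subset)
  qed
  have atw: "at t within {0..} = at t" if "t > 0" for t :: real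
    using that by (intro at_within_interior) simp
  define w where "w = (\<lambda>i. \<Sum>j=1..n. W i j)"
  have w0: "w i \<ge> 0" if "i \<in> {1..n}" for i
    unfolding w_def using Wnn[OF that] by (intro sum_nonneg) auto
  define L where "L = 1 + (\<Sum>i=1..n. \<delta> i + \<sigma> i + \<kappa> i + \<gamma> i + 8 * \<beta> i * w i)"
  have termnn: "0 \<le> \<delta> i + \<sigma> i + \<kappa> i + \<gamma> i + 8 * \<beta> i * w i" if "i \<in> {1..n}" for i
    using par[OF that] w0[OF that] by simp
  have Lb: "1 + (\<delta> i + \<sigma> i + \<kappa> i + \<gamma> i + 8 * \<beta> i * w i) \<le> L" if "i \<in> {1..n}" for i
  proof -
    have "(\<delta> i + \<sigma> i + \<kappa> i + \<gamma> i + 8 * \<beta> i * w i) \<le> (\<Sum>i=1..n. \<delta> i + \<sigma> i + \<kappa> i + \<gamma> i + 8 * \<beta> i * w i)"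
      by (rule member_le_sum) (use that termnn in auto)
    then show ?thesis unfolding L_def by simp
  qed
  have L0: "L \<ge> 0" using Lb[of 1] termnn[of 1] n by auto
  define X where "X = (\<lambda>v::nat. if v = 0 then s else if v = 1 then a else if v = 2 then p else r)"
  have key: "\<forall>k\<in>{1..n}\<times>{0..<4}. \<forall>t\<in>{0..T}. X (snd k) (fst k) t + \<epsilon> * exp (L * t) > 0"
    if T: "T \<ge> 0" and eps: "0 < \<epsilon>" "\<epsilon> \<le> exp (- L * T)" for T \<epsilon>
  proof (rule barrier[where y = "\<lambda>k t. X (snd k) (fst k) t + \<epsilon> * exp (L * t)"])
    show "finite ({1..n}\<times>{0..<4::nat})" by simp
    show "0 \<le> T" by fact
  next
    fix k assume k: "k \<in> {1..n}\<times>{0..<4::nat}"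
    then obtain i v where kv: "k = (i,v)" "i \<in> {1..n}" "v < 4" by auto
    have "continuous_on {0..T} (X v i)" using cont[OF kv(2), of T] unfolding X_def by auto
    then show "continuous_on {0..T} (\<lambda>t. X (snd k) (fst k) t + \<epsilon> * exp (L * t))"
      using kv by (auto intro!: continuous_intros)
    have "X v i 0 \<ge> 0" using init[OF kv(2)] unfolding X_def by auto
    then show "X (snd k) (fst k) 0 + \<epsilon> * exp (L * 0) > 0" using kv eps by simp
  next
    fix k t assume k: "k \<in> {1..n}\<times>{0..<4::nat}" and t: "0 < t" "t \<le> T"
      and allnn: "\<forall>j\<in>{1..n}\<times>{0..<4::nat}. X (snd j) (fst j) t + \<epsilon> * exp (L * t) \<ge> 0"
      and zero: "X (snd k) (fst k) t + \<epsilon> * exp (L * t) = 0"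
    then obtain i v where kv: "k = (i,v)" "i \<in> {1..n}" "v < 4" by auto
    define \<eta> where "\<eta> = \<epsilon> * exp (L * t)"
    have eta0: "\<eta> > 0" unfolding \<eta>_def using eps by simp
    have "exp (L * t) \<le> exp (L * T)" using L0 t by (simp add: mult_left_mono)
    then have "\<eta> \<le> exp (- L * T) * exp (L * T)" unfolding \<eta>_def using eps
      by (intro mult_mono) auto
    then have eta1: "\<eta> \<le> 1" by (simp add: exp_minus field_simps)
    have lb: "s j t \<ge> -\<eta> \<and> a j t \<ge> -\<eta> \<and> p j t \<ge> -\<eta> \<and> r j t \<ge> -\<eta>" if j: "j \<in> {1..n}" for j
      using allnn[rule_format, of "(j,0)"] allnn[rule_format, of "(j,1)"]
        allnn[rule_format, of "(j,2)"] allnn[rule_format, of "(j,3)"] j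
      unfolding X_def \<eta>_def by auto
    have ub: "s j t \<le> 4 \<and> a j t + p j t \<le> 4" if j: "j \<in> {1..n}" for j
      using lb[OF j] cons[OF j, of t] t eta1 by auto
    define S where "S = (\<Sum>j=1..n. W i j * (a j t + p j t))"
    have Slb: "S \<ge> -2*\<eta>*w i"
    proof -
      have "(\<Sum>j=1..n. W i j * (-2*\<eta>)) \<le> S" unfolding S_def
        using lb Wnn[OF kv(2)] by (intro sum_mono mult_left_mono) force+
      moreover have "(\<Sum>j=1..n. W i j * (-2*\<eta>)) = -2*\<eta>*w i"
        unfolding w_def sum_distrib_right[symmetric] by simp
      ultimately show ?thesis by simp
    qed
    have Sub: "S \<le> 4 * w i"
    proof -
      have "S \<le> (\<Sum>j=1..n. W i j * 4)" unfolding S_def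
        using ub Wnn[OF kv(2)] by (intro sum_mono mult_left_mono) force+
      moreover have "(\<Sum>j=1..n. W i j * 4) = 4 * w i"
        unfolding w_def sum_distrib_right[symmetric] by simp
      ultimately show ?thesis by simp
    qed
    have prod: "s i t * S \<ge> -8*\<eta>*w i"
      using lb[OF kv(2)] ub[OF kv(2)] Slb Sub eta0 w0[OF kv(2)] by (intro prod_lb) auto
    have dexp: "((\<lambda>t. \<epsilon> * exp (L * t)) has_real_derivative L * \<eta>) (at t)"
      unfolding \<eta>_def by (auto intro!: derivative_eq_intros)
    have Lbi: "1 + (\<delta> i + \<sigma> i + \<kappa> i + \<gamma> i + 8 * \<beta> i * w i) \<le> L" using Lb[OF kv(2)] .
    note pi = par[OF kv(2)]
    have v4: "v = 0 \<or> v = 1 \<or> v = 2 \<or> v = 3" using kv by auto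
    then show "\<exists>D>0. ((\<lambda>t. X (snd k) (fst k) t + \<epsilon> * exp (L * t)) has_real_derivative D) (at t)"
    proof (elim disjE)
      assume v: "v = 0"
      have "s i t = -\<eta>" using zero kv v unfolding X_def \<eta>_def by simp
      then have pos: "- \<beta> i * s i t * S + \<delta> i * r i t + L*\<eta> > 0"
        using case_s[of "\<beta> i" "\<delta> i" "w i" \<eta> S "r i t" "s i t" L] pi w0[OF kv(2)] eta0 eta1 Slb lb[OF kv(2)] Lbi
        by auto
      have "((\<lambda>t. s i t + \<epsilon> * exp (L * t)) has_real_derivative (- \<beta> i * s i t * S + \<delta> i * r i t + L*\<eta>)) (at t)"
        using DERIV_add[OF ds[OF kv(2), of t, unfolded atw[OF t(1)]] dexp] t unfolding S_def by simp
      then show ?thesis using pos kv v unfolding X_def by auto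
    next
      assume v: "v = 1"
      have "a i t = -\<eta>" using zero kv v unfolding X_def \<eta>_def by simp
      then have pos: "q * \<beta> i * (s i t * S) - \<sigma> i * a i t - \<kappa> i * a i t + L*\<eta> > 0"
        using case_a[of "\<beta> i" "\<sigma> i" "\<kappa> i" "w i" \<eta> q "s i t * S" "a i t" L] pi w0[OF kv(2)] eta0 q prod Lbi
        by auto
      have "((\<lambda>t. a i t + \<epsilon> * exp (L * t)) has_real_derivative (q * \<beta> i * (s i t * S) - \<sigma> i * a i t - \<kappa> i * a i t + L*\<eta>)) (at t)"
        using DERIV_add[OF da[OF kv(2), of t, unfolded atw[OF t(1)]] dexp] t unfolding S_def
        by (simp add: mult.assoc)
      then show ?thesis using pos kv v unfolding X_def by auto
    next
      assume v: "v = 2"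
      have "p i t = -\<eta>" using zero kv v unfolding X_def \<eta>_def by simp
      then have pos: "(1 - q) * \<beta> i * (s i t * S) + \<sigma> i * a i t - \<gamma> i * p i t + L*\<eta> > 0"
        using case_p[of "\<beta> i" "\<sigma> i" "\<gamma> i" "w i" \<eta> q "s i t * S" "a i t" "p i t" L] pi w0[OF kv(2)] eta0 q prod Lbi lb[OF kv(2)]
        by auto
      have "((\<lambda>t. p i t + \<epsilon> * exp (L * t)) has_real_derivative ((1 - q) * \<beta> i * (s i t * S) + \<sigma> i * a i t - \<gamma> i * p i t + L*\<eta>)) (at t)"
        using DERIV_add[OF dp[OF kv(2), of t, unfolded atw[OF t(1)]] dexp] t unfolding S_def
        by (simp add: mult.assoc)
      then show ?thesis using pos kv v unfolding X_def by auto
    next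
      assume v: "v = 3"
      have "r i t = -\<eta>" using zero kv v unfolding X_def \<eta>_def by simp
      moreover have "\<beta> i * w i \<ge> 0" using pi w0[OF kv(2)] by simp
      then have "1 + \<kappa> i + \<gamma> i \<le> L" using Lbi pi by linarith
      ultimately have pos: "\<kappa> i * a i t + \<gamma> i * p i t - \<delta> i * r i t + L*\<eta> > 0"
        using case_r[of "\<kappa> i" "\<gamma> i" "\<delta> i" \<eta> "a i t" "p i t" "r i t" L] pi eta0 Lbi lb[OF kv(2)]
        by auto
      have "((\<lambda>t. r i t + \<epsilon> * exp (L * t)) has_real_derivative (\<kappa> i * a i t + \<gamma> i * p i t - \<delta> i * r i t + L*\<eta>)) (at t)"
        using DERIV_add[OF dr[OF kv(2), of t, unfolded atw[OF t(1)]] dexp] t by simp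
      then show ?thesis using pos kv v unfolding X_def by auto
    qed
  qed
  have nn: "X v i t \<ge> 0" if i: "i \<in> {1..n}" and v: "v < 4" and t: "t \<ge> 0" for i v t
  proof (rule ccontr)
    assume neg: "\<not> X v i t \<ge> 0"
    define \<epsilon> where "\<epsilon> = min (exp (- L * t)) (- X v i t / (2 * exp (L * t)))"
    have e0: "\<epsilon> > 0" using neg unfolding \<epsilon>_def by (simp add: divide_neg_pos)
    have e1: "\<epsilon> \<le> exp (- L * t)" unfolding \<epsilon>_def by simp
    have "X v i t + \<epsilon> * exp (L * t) > 0"
      using key[OF t e0 e1] i v t by auto
    moreover have "\<epsilon> * exp (L * t) \<le> (- X v i t / (2 * exp (L * t))) * exp (L * t)"
      unfolding \<epsilon>_def by (intro mult_right_mono) auto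
    moreover have "(- X v i t / (2 * exp (L * t))) * exp (L * t) = - X v i t / 2" by simp
    ultimately show False using neg by linarith
  qed
  show ?thesis
  proof (intro allI impI ballI)
    fix t :: real and i assume t: "t \<ge> 0" and i: "i \<in> {1..n}"
    have "s i t \<ge> 0" "a i t \<ge> 0" "p i t \<ge> 0" "r i t \<ge> 0"
      using nn[OF i _ t, of 0] nn[OF i _ t, of 1] nn[OF i _ t, of 2] nn[OF i _ t, of 3]
      unfolding X_def by auto
    then show "s i t \<in> {0..1} \<and> a i t \<in> {0..1} \<and> p i t \<in> {0..1} \<and> r i t \<in> {0..1} \<and>
      s i t + a i t + p i t + r i t = 1" using cons[OF i t] by auto
  qed
qed

end
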